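(* Let $k \geq 3$, let $F$ be a $k$-edge graph with $\gamma(F) = 1$, let $G$ be a pure $(m,F)$-special graph (with a fixed representation), let $H$ and $I$ be two distinct $F$-constituents of $G$, and let $x \in V(H)$ and $y \in V(I)$. Then $G$ has a minimum $F$-isolating set $D$ with $x, y \in D$.
   Context: All graphs are finite and simple. For $D \subseteq V(G)$, $N_G[D]$ is the closed neighbourhood of $D$. A set $D \subseteq V(G)$ is an $F$-isolating set of $G$ if $G - N_G[D]$ contains no subgraph isomorphic to $F$; $\iota(G,F)$ is the minimum size of such a set, and a minimum $F$-isolating set is one of this size. $\gamma(F)=1$ means $F$ has a vertex adjacent to all other vertices of $F$. A pure $(m,F)$-special graph is a graph obtained as follows: $m+1 = q(k+2)$ for an integer $q\ge 1$; take a tree $T$ with $q$ vertices $v_1,\dots,v_q$, pairwise disjoint copies $F_1,\dots,F_q$ of $F$ disjoint from $V(T)$, and vertices $w_i\in V(F_i)$; the graph has vertex set $V(T)\cup\bigcup_i V(F_i)$ and edge set $E(T)\cup\bigcup_i (E(F_i)\cup\{v_iw_i\})$. $T$ is the quotient graph, and for each $i$ the subgraph $G_i$ with vertex set $\{v_i\}\cup V(F_i)$ and edge set $E(F_i)\cup\{v_iw_i\}$ is an $F$-constituent, with $F$-connection $v_i$. *)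

theory Defs
  imports Main
begin

definition graph :: "'a set \<Rightarrow> 'a set set \<Rightarrow> bool" where
  "graph V E \<longleftrightarrow> finite V \<and> (\<forall>e\<in>E. e \<subseteq> V \<and> card e = 2)"

definition closed_nbhd :: "'a set \<Rightarrow> 'a set set \<Rightarrow> 'a set \<Rightarrow> 'a set" where
  "closed_nbhd V E D = D \<union> {u \<in> V. \<exists>d\<in>D. {u, d} \<in> E}"

definition has_copy_in :: "'b set \<Rightarrow> 'b set set \<Rightarrow> 'a set \<Rightarrow> 'a set set \<Rightarrow> bool" where
  "has_copy_in VF EF W E \<longleftrightarrow>
     (\<exists>\<phi>. inj_on \<phi> VF \<and> \<phi> ` VF \<subseteq> W \<and> (\<forall>e\<in>EF. \<phi> ` e \<in> E))"

definition isolating :: "'b set \<Rightarrow> 'b set set \<Rightarrow> 'a set \<Rightarrow> 'a set set \<Rightarrow> 'a set \<Rightarrow> bool" where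
  "isolating VF EF V E D \<longleftrightarrow>
     D \<subseteq> V \<and> \<not> has_copy_in VF EF (V - closed_nbhd V E D) E"

definition iota :: "'b set \<Rightarrow> 'b set set \<Rightarrow> 'a set \<Rightarrow> 'a set set \<Rightarrow> nat" where
  "iota VF EF V E = (LEAST n. \<exists>D. isolating VF EF V E D \<and> card D = n)"

definition min_isolating :: "'b set \<Rightarrow> 'b set set \<Rightarrow> 'a set \<Rightarrow> 'a set set \<Rightarrow> 'a set \<Rightarrow> bool" where
  "min_isolating VF EF V E D \<longleftrightarrow> isolating VF EF V E D \<and> card D = iota VF EF V E"

definition dom_one :: "'b set \<Rightarrow> 'b set set \<Rightarrow> bool" where
  "dom_one VF EF \<longleftrightarrow> (\<exists>c\<in>VF. \<forall>u\<in>VF. u \<noteq> c \<longrightarrow> {c, u} \<in> EF)"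

definition connected_graph :: "'a set \<Rightarrow> 'a set set \<Rightarrow> bool" where
  "connected_graph V E \<longleftrightarrow> (\<forall>u\<in>V. \<forall>v\<in>V. (u, v) \<in> {(a, b). {a, b} \<in> E}\<^sup>*)"

definition has_cycle :: "'a set \<Rightarrow> 'a set set \<Rightarrow> bool" where
  "has_cycle V E \<longleftrightarrow> (\<exists>xs. length xs \<ge> 3 \<and> distinct xs \<and> set xs \<subseteq> V \<and>
      (\<forall>i<length xs. {xs ! i, xs ! ((i + 1) mod length xs)} \<in> E))"

definition tree :: "'a set \<Rightarrow> 'a set set \<Rightarrow> bool" where
  "tree V E \<longleftrightarrow> graph V E \<and> V \<noteq> {} \<and> connected_graph V E \<and> \<not> has_cycle V E"

text \<open>A representation of G = (V,E) as a pure (m,F)-special graph: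
  q copies; tree T with vertices v 0, ..., v (q-1) and edge set ET;
  copy F_i is the image of F under the injection \<sigma> i; w_i = \<sigma> i (c i).\<close>
definition pure_special ::
  "nat \<Rightarrow> 'b set \<Rightarrow> 'b set set \<Rightarrow> 'a set \<Rightarrow> 'a set set \<Rightarrow>
   nat \<Rightarrow> (nat \<Rightarrow> 'a) \<Rightarrow> 'a set set \<Rightarrow> (nat \<Rightarrow> 'b \<Rightarrow> 'a) \<Rightarrow> (nat \<Rightarrow> 'b) \<Rightarrow> bool" where
  "pure_special m VF EF V E q v ET \<sigma> c \<longleftrightarrow>
     q \<ge> 1 \<and> m + 1 = q * (card EF + 2) \<and>
     inj_on v {..<q} \<and> tree (v ` {..<q}) ET \<and>
     (\<forall>i<q. inj_on (\<sigma> i) VF) \<and>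
     (\<forall>i<q. \<sigma> i ` VF \<inter> v ` {..<q} = {}) \<and>
     (\<forall>i<q. \<forall>j<q. i \<noteq> j \<longrightarrow> \<sigma> i ` VF \<inter> \<sigma> j ` VF = {}) \<and>
     (\<forall>i<q. c i \<in> VF) \<and>
     V = v ` {..<q} \<union> (\<Union>i<q. \<sigma> i ` VF) \<and>
     E = ET \<union> (\<Union>i<q. ((`) (\<sigma> i)) ` EF \<union> {{v i, \<sigma> i (c i)}})"

definition constituent_verts :: "'b set \<Rightarrow> (nat \<Rightarrow> 'a) \<Rightarrow> (nat \<Rightarrow> 'b \<Rightarrow> 'a) \<Rightarrow> nat \<Rightarrow> 'a set" where
  "constituent_verts VF v \<sigma> i = insert (v i) (\<sigma> i ` VF)"

end

theory Submission
  imports Defs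
begin

locale psx =
  fixes m :: nat and VF :: "'b set" and EF :: "'b set set" and V :: "'a set" and E :: "'a set set"
    and q :: nat and v :: "nat \<Rightarrow> 'a" and ET :: "'a set set" and s :: "nat \<Rightarrow> 'b \<Rightarrow> 'a"
    and c :: "nat \<Rightarrow> 'b"
  assumes ps: "pure_special m VF EF V E q v ET s c" and gr: "graph VF EF"
begin

lemma finVF: "finite VF" using gr unfolding graph_def by auto

lemma EFsub: "e \<in> EF \<Longrightarrow> e \<subseteq> VF \<and> card e = 2" using gr unfolding graph_def by auto

lemma vinj: "l < q \<Longrightarrow> n < q \<Longrightarrow> v l = v n \<Longrightarrow> l = n"
  using ps unfolding pure_special_def inj_on_def by auto

lemma sv: "l < q \<Longrightarrow> n < q \<Longrightarrow> a \<in> VF \<Longrightarrow> s l a \<noteq> v n"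
  using ps unfolding pure_special_def by blast

lemma ss: "l < q \<Longrightarrow> n < q \<Longrightarrow> a \<in> VF \<Longrightarrow> b \<in> VF \<Longrightarrow> s l a = s n b \<Longrightarrow> l = n \<and> a = b"
proof -
  assume h: "l < q" "n < q" "a \<in> VF" "b \<in> VF" "s l a = s n b"
  have "l = n"
  proof (rule ccontr)
    assume "l \<noteq> n"
    then have "s l ` VF \<inter> s n ` VF = {}" using ps h unfolding pure_special_def by blast
    then show False using h by blast
  qed
  moreover have "inj_on (s l) VF" using ps h unfolding pure_special_def by blast
  ultimately show ?thesis using h by (auto dest: inj_onD)
qed

lemma cin: "l < q \<Longrightarrow> c l \<in> VF" using ps unfolding pure_special_def by blast

lemma sinj: "l < q \<Longrightarrow> inj_on (s l) VF" using ps unfolding pure_special_def by blast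

lemma ETsub: "e \<in> ET \<Longrightarrow> e \<subseteq> v ` {..<q} \<and> card e = 2"
  using ps unfolding pure_special_def tree_def graph_def by blast

lemma Edef: "E = ET \<union> (\<Union>i<q. ((`) (s i)) ` EF \<union> {{v i, s i (c i)}})"
  using ps unfolding pure_special_def by blast

lemma Vdef: "V = v ` {..<q} \<union> (\<Union>i<q. s i ` VF)"
  using ps unfolding pure_special_def by blast

lemma finV: "finite V" using Vdef finVF by auto

lemma N1:
  assumes l: "l < q" and a: "a \<in> VF" and e: "{s l a, z} \<in> E"
  shows "(\<exists>a'\<in>VF. z = s l a' \<and> {a, a'} \<in> EF) \<or> (a = c l \<and> z = v l)"
proof -
  consider "{s l a, z} \<in> ET" | n f where "n < q" "f \<in> EF" "{s l a, z} = s n ` f"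
    | n where "n < q" "{s l a, z} = {v n, s n (c n)}"
    using e Edef by blast
  then show ?thesis
  proof cases
    case 1
    then show ?thesis using ETsub[OF 1] sv[OF l _ a] by blast
  next
    case 2
    have fs: "f \<subseteq> VF" "card f = 2" using EFsub[OF 2(2)] by auto
    obtain p r where f: "f = {p, r}" "p \<noteq> r" using fs(2) by (meson card_2_iff)
    have pr: "p \<in> VF" "r \<in> VF" using fs f by auto
    have "s l a \<in> s n ` f" using 2 by blast
    then obtain t where t: "t \<in> f" "s l a = s n t" by blast
    then have ln: "l = n" "a = t" using ss[OF l 2(1) a] fs by auto
    have inj: "inj_on (s l) VF" using sinj l by blast
    have "s l p \<noteq> s l r" using inj pr f(2) by (meson inj_onD)
    show ?thesis
    proof (cases "a = p")
      case True
      then have "z = s l r" using 2 ln f \<open>s l p \<noteq> s l r\<close> by (auto simp: doubleton_eq_iff)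
      have "{a, r} \<in> EF" using True f 2 by simp
      then show ?thesis using \<open>z = s l r\<close> pr by blast
    next
      case False
      then have "a = r" using t ln f by auto
      then have "z = s l p" using 2 ln f \<open>s l p \<noteq> s l r\<close> by (auto simp: doubleton_eq_iff)
      have "{a, p} \<in> EF" using \<open>a = r\<close> f 2 by (simp add: insert_commute)
      then show ?thesis using \<open>z = s l p\<close> pr by blast
    qed
  next
    case 3
    have "s l a \<noteq> v n" using sv l 3(1) a by blast
    then have "s l a = s n (c n)" "z = v n" using 3(2) by (auto simp: doubleton_eq_iff)
    then show ?thesis using ss[OF l 3(1) a cin[OF 3(1)]] by auto
  qed
qed

lemma N2:
  assumes l: "l < q" and e: "{v l, z} \<in> E"
  shows "(\<exists>n<q. z = v n) \<or> z = s l (c l)"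
proof -
  consider "{v l, z} \<in> ET" | n f where "n < q" "f \<in> EF" "{v l, z} = s n ` f"
    | n where "n < q" "{v l, z} = {v n, s n (c n)}"
    using e Edef by blast
  then show ?thesis
  proof cases
    case 1
    then show ?thesis using ETsub[OF 1] by blast
  next
    case 2
    then have "v l \<in> s n ` VF" using EFsub by blast
    then obtain t where "t \<in> VF" "v l = s n t" by blast
    then show ?thesis using sv[OF 2(1) l \<open>t \<in> VF\<close>] by simp
  next
    case 3
    have "v l \<noteq> s n (c n)" using sv l 3(1) cin by metis
    then have "v l = v n" "z = s n (c n)" using 3(2) by (auto simp: doubleton_eq_iff)
    then show ?thesis using vinj l 3(1) by blast
  qed
qed


lemma con_iff: "z \<in> constituent_verts VF v s l \<longleftrightarrow> z = v l \<or> z \<in> s l ` VF"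
  unfolding constituent_verts_def by auto

lemma con_disj:
  assumes "l < q" "n < q" "z \<in> constituent_verts VF v s l" "z \<in> constituent_verts VF v s n"
  shows "l = n"
proof -
  consider "z = v l" | a where "a \<in> VF" "z = s l a" using assms(3) con_iff by blast
  then show ?thesis
  proof cases
    case 1
    from assms(4) consider "z = v n" | b where "b \<in> VF" "z = s n b" using con_iff by blast
    then show ?thesis
    proof cases
      case 1
      then show ?thesis using \<open>z = v l\<close> vinj assms by metis
    next
      case 2
      then show ?thesis using \<open>z = v l\<close> sv assms by metis
    qed
  next
    case 2
    from assms(4) consider "z = v n" | b where "b \<in> VF" "z = s n b" using con_iff by blast
    then show ?thesis
    proof cases
      case 1
      then show ?thesis using 2 sv assms by metis
    next
      case 3: 2
      then show ?thesis using 2 ss assms by metis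
    qed
  qed
qed

lemma con_sub: "l < q \<Longrightarrow> constituent_verts VF v s l \<subseteq> V"
  using Vdef unfolding constituent_verts_def by auto

lemma sedge: "l < q \<Longrightarrow> e \<in> EF \<Longrightarrow> s l ` e \<in> E"
  using Edef by blast

lemma cedge: "l < q \<Longrightarrow> {v l, s l (c l)} \<in> E"
  using Edef by blast

lemma lower:
  assumes iso: "isolating VF EF V E D'"
  shows "q \<le> card D'"
proof -
  have D'V: "D' \<subseteq> V" using iso unfolding isolating_def by blast
  have ex: "\<exists>t\<in>D'. t \<in> constituent_verts VF v s l" if l: "l < q" for l
  proof (rule ccontr)
    assume nt: "\<not> (\<exists>t\<in>D'. t \<in> constituent_verts VF v s l)"
    have "s l ` VF \<subseteq> V - closed_nbhd V E D'"
    proof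
      fix z assume "z \<in> s l ` VF"
      then obtain a where a: "a \<in> VF" "z = s l a" by blast
      have zV: "z \<in> V" using a Vdef l by blast
      have "z \<notin> D'" using nt a con_iff by blast
      moreover have "\<not> (\<exists>t\<in>D'. {z, t} \<in> E)"
      proof
        assume "\<exists>t\<in>D'. {z, t} \<in> E"
        then obtain t where t: "t \<in> D'" "{s l a, t} \<in> E" using a by blast
        from N1[OF l a(1) t(2)] have "t \<in> constituent_verts VF v s l" using con_iff by blast
        then show False using nt t by blast
      qed
      ultimately show "z \<in> V - closed_nbhd V E D'" using zV unfolding closed_nbhd_def by blast
    qed
    then have "has_copy_in VF EF (V - closed_nbhd V E D') E"
      unfolding has_copy_in_def using sinj[OF l] sedge[OF l] by blast
    then show False using iso unfolding isolating_def by blast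
  qed
  define f where "f l = (SOME t. t \<in> D' \<and> t \<in> constituent_verts VF v s l)" for l
  have f: "f l \<in> D' \<and> f l \<in> constituent_verts VF v s l" if "l < q" for l
    unfolding f_def using someI_ex[OF ex[OF that, unfolded Bex_def]] .
  have "inj_on f {..<q}"
    by (rule inj_onI) (use f con_disj in \<open>metis lessThan_iff\<close>)
  moreover have "f ` {..<q} \<subseteq> D'" using f by blast
  moreover have "finite D'" using D'V finV finite_subset by blast
  ultimately show ?thesis using card_inj_on_le by fastforce
qed

lemma VF3:
  assumes k3: "3 \<le> card EF"
  shows "3 \<le> card VF"
proof -
  let ?P = "{e. e \<subseteq> VF \<and> card e = 2}"
  have "EF \<subseteq> ?P" using EFsub by blast
  moreover have "finite ?P" using finVF by simp
  ultimately have "card EF \<le> card ?P" by (rule card_mono[rotated])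
  also have "card ?P = card VF choose 2" using n_subsets[OF finVF] by simp
  finally have "3 \<le> card VF choose 2" using k3 by linarith
  show ?thesis
  proof (rule ccontr)
    assume "\<not> 3 \<le> card VF"
    then have "card VF = 0 \<or> card VF = 1 \<or> card VF = 2" by linarith
    then have "card VF choose 2 \<le> 1" by (auto simp: choose_two)
    then show False using \<open>3 \<le> card VF choose 2\<close> by linarith
  qed
qed

lemma allpairs:
  assumes k3: "3 \<le> card EF" and c3: "card VF = 3"
  shows "EF = {e. e \<subseteq> VF \<and> card e = 2}"
proof -
  let ?P = "{e. e \<subseteq> VF \<and> card e = 2}"
  have sub: "EF \<subseteq> ?P" using EFsub by blast
  moreover have fin: "finite ?P" using finVF by simp
  moreover have "card ?P = 3" using n_subsets[OF finVF] c3 by (simp add: choose_two)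
  ultimately show ?thesis using k3 card_mono[OF fin sub] by (metis card_subset_eq le_antisym)
qed


context
  fixes i j :: nat and x y :: 'a and c0 :: 'b
  assumes ij: "i < q" "j < q" "i \<noteq> j"
    and xc: "x \<in> constituent_verts VF v s i" and yc: "y \<in> constituent_verts VF v s j"
    and c0: "c0 \<in> VF" "\<forall>u\<in>VF. u \<noteq> c0 \<longrightarrow> {c0, u} \<in> EF"
    and k3: "3 \<le> card EF"
begin

definition dd :: "nat \<Rightarrow> 'a" where
  "dd l = (if l = i then x else if l = j then y else v l)"

definition DD :: "'a set" where "DD = dd ` {..<q}"

lemma dd_con: "l < q \<Longrightarrow> dd l \<in> constituent_verts VF v s l"
  unfolding dd_def using xc yc by (auto simp: constituent_verts_def)

lemma dd_v: "l \<noteq> i \<Longrightarrow> l \<noteq> j \<Longrightarrow> dd l = v l"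
  unfolding dd_def by auto

lemma dd_inj: "inj_on dd {..<q}"
  by (rule inj_onI) (use dd_con con_disj in \<open>metis lessThan_iff\<close>)

lemma card_DD: "card DD = q"
  unfolding DD_def using dd_inj by (simp add: card_image)

lemma DD_sub: "DD \<subseteq> V"
  unfolding DD_def using dd_con con_sub by blast

lemma dd_in: "l < q \<Longrightarrow> dd l \<in> DD" unfolding DD_def by blast

abbreviation "W \<equiv> V - closed_nbhd V E DD"

lemma inW: "z \<in> W \<Longrightarrow> z \<in> V \<and> z \<notin> DD \<and> (\<forall>t\<in>DD. {z, t} \<notin> E)"
  unfolding closed_nbhd_def by blast

lemma no_copy: "\<not> has_copy_in VF EF W E"
proof
  assume "has_copy_in VF EF W E"
  then obtain \<phi> where phi: "inj_on \<phi> VF" "\<phi> ` VF \<subseteq> W" "\<forall>e\<in>EF. \<phi> ` e \<in> E"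
    unfolding has_copy_in_def by blast
  define u where "u = \<phi> c0"
  define S where "S = \<phi> ` VF"
  have cardS: "card S = card VF" unfolding S_def using phi(1) by (simp add: card_image)
  have VF3': "3 \<le> card VF" using VF3 k3 by blast
  have finS: "finite S" unfolding S_def using finVF by simp
  have SW: "S \<subseteq> W" using phi unfolding S_def by blast
  have Snb: "z = u \<or> {u, z} \<in> E" if zS: "z \<in> S" for z
  proof -
    obtain b where b: "b \<in> VF" "z = \<phi> b" using zS S_def by blast
    show ?thesis
    proof (cases "b = c0")
      case True then show ?thesis using b u_def by simp
    next
      case False
      then have "{c0, b} \<in> EF" using c0 b by blast
      then have "\<phi> ` {c0, b} \<in> E" using phi by blast
      then show ?thesis using b u_def by simp
    qed
  qed
  have uW: "u \<in> W" using SW c0 unfolding S_def u_def by blast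
  then have "u \<in> V" by blast
  then consider l where "l < q" "u = v l" | l a where "l < q" "a \<in> VF" "u = s l a"
    using Vdef by blast
  then show False
  proof cases
    case 2
    note l = 2(1) and a = 2(2) and ua = 2(3)
    from dd_con[OF l] consider "dd l = v l" | b where "b \<in> VF" "dd l = s l b" using con_iff by blast
    then show False
    proof cases
      case 1
      define w where "w = s l (c l)"
      have wE: "{w, v l} \<in> E" using cedge[OF l] unfolding w_def by (simp add: insert_commute)
      have "v l \<in> DD" using 1 dd_in[OF l] by simp
      then have wW: "w \<notin> W" using wE inW by blast
      have "S \<subseteq> s l ` VF - {w}"
      proof
        fix z assume z: "z \<in> S"
        then have zW: "z \<in> W" using SW by blast
        from Snb[OF z] show "z \<in> s l ` VF - {w}"
        proof
          assume "z = u" then show ?thesis using ua a zW wW by blast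
        next
          assume "{u, z} \<in> E"
          then have "{s l a, z} \<in> E" using ua by simp
          from N1[OF l a this] show ?thesis
          proof
            assume "a = c l \<and> z = v l"
            then have "u = w" using ua w_def by simp
            then show ?thesis using uW wW by blast
          next
            assume "\<exists>a'\<in>VF. z = s l a' \<and> {a, a'} \<in> EF"
            then show ?thesis using zW wW by blast
          qed
        qed
      qed
      then have "card S \<le> card (s l ` VF - {w})" using finVF by (intro card_mono) auto
      also have "\<dots> = card VF - 1"
        using w_def cin[OF l] sinj[OF l] by (simp add: card_image)
      finally show False using cardS VF3' by linarith
    next
      case 2
      note b = 2(1) and db = 2(2)
      define t where "t = dd l"
      have tD: "t \<in> DD" using dd_in[OF l] t_def by simp
      have uS: "s l a \<notin> DD \<and> (\<forall>t\<in>DD. {s l a, t} \<notin> E)" using inW[OF uW] ua by simp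
      show False
      proof (cases "a = c0")
        case True
        show False
        proof (cases "b = c0")
          case True
          then show False using \<open>a = c0\<close> uS tD t_def db by simp
        next
          case False
          then have "{c0, b} \<in> EF" using c0 b by blast
          then have "s l ` {c0, b} \<in> E" using sedge[OF l] by blast
          then show False using \<open>a = c0\<close> uS tD t_def db by simp
        qed
      next
        case anc0: False
        show False
        proof (cases "b = c0")
          case True
          have "{c0, a} \<in> EF" using c0 a anc0 by blast
          then have "s l ` {c0, a} \<in> E" using sedge[OF l] by blast
          then have "{s l a, s l c0} \<in> E" by (simp add: insert_commute)
          moreover have "s l c0 \<in> DD" using True tD t_def db by simp
          ultimately show False using uS by blast
        next
          case bnc0: False
          define g where "g = s l c0"
          have "{c0, b} \<in> EF" using c0 b bnc0 by blast
          then have "{g, t} \<in> E" using sedge[OF l] g_def t_def db by force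
          moreover have "g \<in> V" using g_def c0 Vdef l by blast
          ultimately have gW: "g \<notin> W" using tD unfolding closed_nbhd_def by blast
          have tW: "t \<notin> W" using tD inW by blast
          have gt: "g \<noteq> t" using g_def t_def db bnc0 sinj[OF l] c0 b by (metis inj_onD)
          have "S \<subseteq> insert (v l) (s l ` VF) - {g, t}"
          proof
            fix z assume z: "z \<in> S"
            then have zW: "z \<in> W" using SW by blast
            have "z \<in> insert (v l) (s l ` VF)"
              using Snb[OF z]
            proof
              assume "z = u" then show ?thesis using ua a by blast
            next
              assume "{u, z} \<in> E"
              then have "{s l a, z} \<in> E" using ua by simp
              from N1[OF l a this] show ?thesis by blast
            qed
            then show "z \<in> insert (v l) (s l ` VF) - {g, t}" using zW gW tW by blast
          qed
          then have "card S \<le> card (insert (v l) (s l ` VF) - {g, t})" using finVF by (intro card_mono) auto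
          also have "\<dots> = card (insert (v l) (s l ` VF)) - 2"
          proof -
            have "{g, t} \<subseteq> insert (v l) (s l ` VF)" using g_def t_def db c0 b by blast
            then show ?thesis using gt finVF by (subst card_Diff_subset) auto
          qed
          also have "card (insert (v l) (s l ` VF)) = card VF + 1"
          proof -
            have "v l \<notin> s l ` VF" using sv[OF l l] by (metis imageE)
            then show ?thesis using finVF sinj[OF l] by (simp add: card_image)
          qed
          finally show False using cardS VF3' by linarith
        qed
      qed
    qed
  next
    case 1
    note l = 1(1) and uv = 1(2)
    have "dd l \<noteq> v l" using uv inW[OF uW] dd_in[OF l] by auto
    then have lij: "l = i \<or> l = j" using dd_v by blast
    define o' where "o' = (if l = i then j else i)"
    have o: "o' < q" "o' \<noteq> l" "o' = i \<or> o' = j" using o'_def ij lij by auto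
    have Ssub: "S \<subseteq> {v l, s l (c l), v o'}"
    proof
      fix z assume z: "z \<in> S"
      then have zW: "z \<in> W" using SW by blast
      from Snb[OF z] show "z \<in> {v l, s l (c l), v o'}"
      proof
        assume "z = u" then show ?thesis using uv by simp
      next
        assume "{u, z} \<in> E"
        then have "{v l, z} \<in> E" using uv by simp
        from N2[OF l this] show ?thesis
        proof
          assume "\<exists>n<q. z = v n"
          then obtain n where n: "n < q" "z = v n" by blast
          show ?thesis
          proof (cases "n = i \<or> n = j")
            case True then show ?thesis using n o'_def lij by auto
          next
            case False
            then have "z \<in> DD" using dd_v dd_in[OF n(1)] n by auto
            then show ?thesis using zW inW by blast
          qed
        qed simp
      qed
    qed
    have c3: "card {v l, s l (c l), v o'} \<le> 3" by (simp add: card_insert_le_m1)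
    then have "card VF = 3" using card_mono[OF _ Ssub] cardS VF3' by simp
    then have EFall: "EF = {e. e \<subseteq> VF \<and> card e = 2}" using allpairs k3 by blast
    have "card S = card {v l, s l (c l), v o'}" using card_mono[OF _ Ssub] cardS VF3' c3 by simp
    then have Seq: "S = {v l, s l (c l), v o'}" using card_subset_eq[OF _ Ssub] by simp
    then obtain p r where pr: "p \<in> VF" "r \<in> VF" "\<phi> p = s l (c l)" "\<phi> r = v o'"
      unfolding S_def by (metis imageE insertCI)
    have "s l (c l) \<noteq> v o'" using sv[OF l o(1) cin[OF l]] .
    then have "p \<noteq> r" using pr by auto
    then have "{p, r} \<in> EF" using EFall pr by auto
    then have "{s l (c l), v o'} \<in> E" using phi pr by force
    from N1[OF l cin[OF l] this] show False
    proof
      assume "\<exists>a'\<in>VF. v o' = s l a' \<and> {c l, a'} \<in> EF"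
      then obtain a' where "a' \<in> VF" "v o' = s l a'" by blast
      then show False using sv[OF l o(1) \<open>a' \<in> VF\<close>] by simp
    next
      assume "c l = c l \<and> v o' = v l"
      then show False using vinj[OF o(1) l] o(2) by blast
    qed
  qed
qed

lemma DD_iso: "isolating VF EF V E DD"
  unfolding isolating_def using DD_sub no_copy by blast

lemma iota_q: "iota VF EF V E = q"
  unfolding iota_def
proof (rule Least_equality)
  show "\<exists>D. isolating VF EF V E D \<and> card D = q" using DD_iso card_DD by blast
next
  fix n assume "\<exists>D. isolating VF EF V E D \<and> card D = n"
  then show "q \<le> n" using lower by blast
qed

lemma main: "\<exists>D. min_isolating VF EF V E D \<and> x \<in> D \<and> y \<in> D"
proof -
  have "x = dd i" "y = dd j" unfolding dd_def using ij by auto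
  then have "x \<in> DD" "y \<in> DD" using dd_in[OF ij(1)] dd_in[OF ij(2)] by simp_all
  then show ?thesis using DD_iso card_DD iota_q unfolding min_isolating_def by blast
qed

end
end

theorem lemma3p5:
  fixes VF :: "'b set" and EF :: "'b set set"
    and V :: "'a set" and E :: "'a set set"
    and v :: "nat \<Rightarrow> 'a" and \<sigma> :: "nat \<Rightarrow> 'b \<Rightarrow> 'a" and c :: "nat \<Rightarrow> 'b"
  assumes "graph VF EF"
    and "card EF = k" and "k \<ge> 3"
    and "dom_one VF EF"
    and "pure_special m VF EF V E q v ET \<sigma> c"
    and "i < q" and "j < q" and "i \<noteq> j"
    and "x \<in> constituent_verts VF v \<sigma> i"
    and "y \<in> constituent_verts VF v \<sigma> j"
  shows "\<exists>D. min_isolating VF EF V E D \<and> x \<in> D \<and> y \<in> D"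
proof -
  interpret psx m VF EF V E q v ET \<sigma> c using assms(1,5) by unfold_locales
  obtain c0 where c0: "c0 \<in> VF" "\<forall>u\<in>VF. u \<noteq> c0 \<longrightarrow> {c0, u} \<in> EF"
    using assms(4) unfolding dom_one_def by blast
  show ?thesis using main[OF assms(6,7,8,9,10) c0] assms(2,3) by simp
qed

end
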